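(* Let $\lambda>0$, $a>0$ and $E\in\mathbb{R}$ be fixed, and for $\varepsilon>0$ consider the linear slow-fast system of SDEs \[ dX = -\lambda(X+Y)\,dt + E\sin(at)\,dt + dW_x,\qquad dY = \tfrac{1}{\varepsilon}(X-Y)\,dt + \tfrac{1}{\sqrt{\varepsilon}}\,dW_y, \] together with the approximate macroscopic model \[ d\bar X = -2\lambda \bar X\,dt + E\sin(at)\,dt + dW_x . \] The means $(\mu_X(t),\mu_Y(t))=(\mathbb{E}[X_t],\mathbb{E}[Y_t])$ satisfy the linear ODE $\mu_X'=-\lambda(\mu_X+\mu_Y)+E\sin(at)$, $\mu_Y'=\frac{1}{\varepsilon}(\mu_X-\mu_Y)$, and $\bar\mu_X(t)=\mathbb{E}[\bar X_t]$ satisfies $\bar\mu_X'=-2\lambda\bar\mu_X+E\sin(at)$. Let $\mu_X^{\mathrm{per},\varepsilon}$ denote the $X$-component of the unique $2\pi/a$-periodic solution of the first ODE system, and $\bar\mu_X^{\mathrm{per}}$ the unique $2\pi/a$-periodic solution of the second ODE. Then there exist constants $C>0$ and $\varepsilon_0>0$ (depending on $\lambda,a,E$) such that for all $\varepsilon\in(0,\varepsilon_0)$, \[ \Big\|\mu_X^{\mathrm{per},\varepsilon}-\bar\mu_X^{\mathrm{per}}\Big\|_{L^2([0,2\pi/a])}\le C\,\varepsilon, \] i.e. the $L_2$-error between the slow means of the full system and of the approximate macroscopic model decreases (at least) linearly to zero as $\varepsilon\to 0$.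
   Context: $W_x$ and $W_y$ are independent standard one-dimensional Brownian motions. The "periodic solution" is the invariant periodic orbit of the mean dynamics (the mean evolution started on the invariant curve), on which the error is measured in $L_2$ over one period of the forcing. *)

theory Defs
  imports "HOL-Analysis.Analysis"
begin

definition full_mean_periodic ::
  "real \<Rightarrow> real \<Rightarrow> real \<Rightarrow> real \<Rightarrow> (real \<Rightarrow> real) \<Rightarrow> (real \<Rightarrow> real) \<Rightarrow> bool" where
  "full_mean_periodic lam a E eps mx my \<longleftrightarrow>
     (\<forall>t. (mx has_real_derivative (- lam * (mx t + my t) + E * sin (a * t))) (at t)) \<and>
     (\<forall>t. (my has_real_derivative ((mx t - my t) / eps)) (at t)) \<and>
     (\<forall>t. mx (t + 2 * pi / a) = mx t \<and> my (t + 2 * pi / a) = my t)"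

definition avg_mean_periodic :: "real \<Rightarrow> real \<Rightarrow> real \<Rightarrow> (real \<Rightarrow> real) \<Rightarrow> bool" where
  "avg_mean_periodic lam a E m \<longleftrightarrow>
     (\<forall>t. (m has_real_derivative (- 2 * lam * m t + E * sin (a * t))) (at t)) \<and>
     (\<forall>t. m (t + 2 * pi / a) = m t)"

definition muX_per :: "real \<Rightarrow> real \<Rightarrow> real \<Rightarrow> real \<Rightarrow> real \<Rightarrow> real" where
  "muX_per lam a E eps = fst (THE p. full_mean_periodic lam a E eps (fst p) (snd p))"

definition barmuX_per :: "real \<Rightarrow> real \<Rightarrow> real \<Rightarrow> real \<Rightarrow> real" where
  "barmuX_per lam a E = (THE m. avg_mean_periodic lam a E m)"

definition L2_norm_on :: "real \<Rightarrow> (real \<Rightarrow> real) \<Rightarrow> real" where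
  "L2_norm_on T f = sqrt (integral {0..T} (\<lambda>t. (f t)\<^sup>2))"

end

theory Submission
  imports Defs
begin

lemma lyap:
  fixes V V' :: "real \<Rightarrow> real" and T :: real
  assumes der: "\<And>t. (V has_real_derivative V' t) (at t)"
    and nonpos: "\<And>t. V' t \<le> 0" and per: "\<And>t. V (t + T) = V t" and T: "T > 0"
  shows "V' s = 0"
proof -
  have anti: "V y \<le> V x" if "x \<le> y" for x y
    using DERIV_nonpos_imp_nonincreasing[OF that] der nonpos by blast
  define t where "t = s - T/2"
  have "\<forall>y. \<bar>s - y\<bar> < T/2 \<longrightarrow> V y \<le> V s"
  proof (intro allI impI)
    fix y assume "\<bar>s - y\<bar> < T/2"
    hence "t \<le> y" "y \<le> t + T" "t \<le> s" "s \<le> t + T" unfolding t_def using T by (auto simp: abs_if split: if_splits)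
    hence "V y \<le> V t" "V (t+T) \<le> V s" using anti by auto
    thus "V y \<le> V s" using per[of t] by simp
  qed
  thus ?thesis using DERIV_local_max[OF der[of s], of "T/2"] T by simp
qed

lemma avg_unique:
  assumes lam: "lam > 0" and a: "a > 0"
    and m1: "avg_mean_periodic lam a E m1" and m2: "avg_mean_periodic lam a E m2"
  shows "m1 = m2"
proof
  fix s
  define d where "d = (\<lambda>t. m1 t - m2 t)"
  have dd: "(d has_real_derivative (-2*lam*d t)) (at t)" for t
    using m1 m2 unfolding avg_mean_periodic_def d_def
    by (auto intro!: derivative_eq_intros simp: algebra_simps)
  have "((\<lambda>t. (d t)^2) has_real_derivative (-4*lam*(d t)^2)) (at t)" for t
    by (rule derivative_eq_intros dd refl | simp add: power2_eq_square)+
  moreover have "(\<lambda>t. (d t)^2) (t + 2*pi/a) = (\<lambda>t. (d t)^2) t" for t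
    using m1 m2 unfolding avg_mean_periodic_def d_def by simp
  ultimately have "-4*lam*(d s)^2 = 0"
    using lyap[of "\<lambda>t. (d t)^2" "\<lambda>t. -4*lam*(d t)^2" "2*pi/a" s] lam a
    by (simp add: mult_nonneg_nonneg)
  thus "m1 s = m2 s" using lam unfolding d_def by simp
qed

lemma full_unique:
  assumes lam: "lam > 0" and a: "a > 0" and e: "eps > 0"
    and m1: "full_mean_periodic lam a E eps x1 y1" and m2: "full_mean_periodic lam a E eps x2 y2"
  shows "x1 = x2 \<and> y1 = y2"
proof -
  define x where "x = (\<lambda>t. x1 t - x2 t)"
  define y where "y = (\<lambda>t. y1 t - y2 t)"
  have dx: "(x has_real_derivative (-lam*(x t + y t))) (at t)" for t
    using m1 m2 unfolding full_mean_periodic_def x_def y_def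
    by (auto intro!: derivative_eq_intros simp: algebra_simps)
  have dy: "(y has_real_derivative ((x t - y t)/eps)) (at t)" for t
    using m1 m2 unfolding full_mean_periodic_def x_def y_def
    by (auto intro!: derivative_eq_intros simp: diff_divide_distrib)
  have "((\<lambda>t. (x t)^2 + lam*eps*(y t)^2) has_real_derivative (-2*lam*((x t)^2 + (y t)^2))) (at t)" for t
  proof -
    have "((\<lambda>t. (x t)^2 + lam*eps*(y t)^2) has_real_derivative
       (2 * x t * (-lam*(x t + y t)) + lam*eps*(2 * y t * ((x t - y t)/eps)))) (at t)"
      by (rule derivative_eq_intros dx dy refl | simp)+
    moreover have "2 * x t * (-lam*(x t + y t)) + lam*eps*(2 * y t * ((x t - y t)/eps))
        = -2*lam*((x t)^2 + (y t)^2)"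
      using e by (simp add: field_simps power2_eq_square)
    ultimately show ?thesis by simp
  qed
  moreover have "(\<lambda>t. (x t)^2 + lam*eps*(y t)^2) (t + 2*pi/a) = (\<lambda>t. (x t)^2 + lam*eps*(y t)^2) t" for t
    using m1 m2 unfolding full_mean_periodic_def x_def y_def by simp
  ultimately have "-2*lam*((x s)^2 + (y s)^2) = 0" for s
    using lyap[of "\<lambda>t. (x t)^2 + lam*eps*(y t)^2" "\<lambda>t. -2*lam*((x t)^2 + (y t)^2)" "2*pi/a" s] lam a
    by (simp add: mult_nonneg_nonneg)
  hence "x s = 0 \<and> y s = 0" for s using lam by (simp add: add_nonneg_eq_0_iff)
  thus ?thesis unfolding x_def y_def by auto
qed

definition kk :: "real \<Rightarrow> real \<Rightarrow> real" where "kk a e = 1 + a^2*e^2"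
definition uu :: "real \<Rightarrow> real \<Rightarrow> real \<Rightarrow> real" where "uu lam a e = a*(kk a e - lam*e)"
definition vv :: "real \<Rightarrow> real \<Rightarrow> real \<Rightarrow> real" where "vv lam a e = lam*(kk a e + 1)"
definition DD :: "real \<Rightarrow> real \<Rightarrow> real \<Rightarrow> real" where "DD lam a e = (uu lam a e)^2 + (vv lam a e)^2"
definition pp :: "real \<Rightarrow> real \<Rightarrow> real \<Rightarrow> real \<Rightarrow> real" where
  "pp lam a E e = vv lam a e * kk a e * E / DD lam a e"
definition qq :: "real \<Rightarrow> real \<Rightarrow> real \<Rightarrow> real \<Rightarrow> real" where
  "qq lam a E e = - uu lam a e * kk a e * E / DD lam a e"
definition rr :: "real \<Rightarrow> real \<Rightarrow> real \<Rightarrow> real \<Rightarrow> real" where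
  "rr lam a E e = (pp lam a E e + a*e*qq lam a E e) / kk a e"
definition ss :: "real \<Rightarrow> real \<Rightarrow> real \<Rightarrow> real \<Rightarrow> real" where
  "ss lam a E e = (qq lam a E e - a*e*pp lam a E e) / kk a e"

lemma kk_pos: "kk a e \<ge> 1" unfolding kk_def by simp

lemma DD_pos: "lam > 0 \<Longrightarrow> DD lam a e > 0"
proof -
  assume "lam > 0"
  hence "vv lam a e > 0" unfolding vv_def using kk_pos[of a e] by simp
  thus ?thesis unfolding DD_def by (simp add: add_nonneg_pos)
qed

lemma cramer:
  fixes uA vA kA dA eA pA qA :: real
  assumes "dA = uA^2 + vA^2" "dA \<noteq> 0" "pA = vA*kA*eA/dA" "qA = - uA*kA*eA/dA"
  shows "uA*pA + vA*qA = 0" "vA*pA - uA*qA = eA*kA"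
proof -
  show "uA*pA + vA*qA = 0" unfolding assms(3,4) using assms(2) by (simp add: field_simps)
  show "vA*pA - uA*qA = eA*kA" unfolding assms(3,4) using assms(2)
    by (simp add: field_simps) (simp add: assms(1) algebra_simps power2_eq_square)
qed

lemma coeffs:
  assumes lam: "lam > 0"
  shows "a * pp lam a E e = - lam * (qq lam a E e + ss lam a E e)"
    "- a * qq lam a E e = - lam * (pp lam a E e + rr lam a E e) + E"
    "a * rr lam a E e * e = qq lam a E e - ss lam a E e"
    "- a * ss lam a E e * e = pp lam a E e - rr lam a E e"
proof -
  let ?p = "pp lam a E e" and ?q = "qq lam a E e" and ?k = "kk a e" and ?u = "uu lam a e" and ?v = "vv lam a e"
  have k0: "?k \<noteq> 0" using kk_pos[of a e] by simp
  have c: "?u*?p + ?v*?q = 0" "?v*?p - ?u*?q = E*?k"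
    using cramer[OF DD_def _ pp_def qq_def] DD_pos[OF lam, of a e] by auto
  have ke: "?k = 1 + a^2*e^2" by (simp add: kk_def)
  show "a * pp lam a E e = - lam * (qq lam a E e + ss lam a E e)"
    using c(1) k0 unfolding ss_def uu_def vv_def
    by (simp add: field_simps; simp add: algebra_simps)
  show "- a * qq lam a E e = - lam * (pp lam a E e + rr lam a E e) + E"
    using c(2) k0 unfolding rr_def uu_def vv_def
    by (simp add: field_simps; simp add: algebra_simps)
  show "a * rr lam a E e * e = qq lam a E e - ss lam a E e"
    using k0 unfolding rr_def ss_def
    by (simp add: field_simps ke power2_eq_square; simp add: algebra_simps)
  show "- a * ss lam a E e * e = pp lam a E e - rr lam a E e"
    using k0 unfolding rr_def ss_def
    by (simp add: field_simps ke power2_eq_square; simp add: algebra_simps)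
qed

lemma per_sc:
  assumes "a > 0"
  shows "sin (a * (t + 2*pi/a)) = sin (a*t)" "cos (a * (t + 2*pi/a)) = cos (a*t)"
proof -
  have "a * (t + 2*pi/a) = a*t + 2*pi" using assms by (simp add: field_simps)
  thus "sin (a * (t + 2*pi/a)) = sin (a*t)" "cos (a * (t + 2*pi/a)) = cos (a*t)" by simp_all
qed

lemma sc_deriv:
  "((\<lambda>t. pA * sin (a*t) + qA * cos (a*t)) has_real_derivative (a*pA*cos (a*t) - a*qA* sin (a*t))) (at t)"
  by (rule derivative_eq_intros refl | simp)+

lemma full_exists:
  assumes lam: "lam > 0" and a: "a > 0" and e: "e > 0"
  shows "full_mean_periodic lam a E e
     (\<lambda>t. pp lam a E e * sin (a*t) + qq lam a E e * cos (a*t))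
     (\<lambda>t. rr lam a E e * sin (a*t) + ss lam a E e * cos (a*t))"
proof -
  note c = coeffs[OF lam, of a E e]
  let ?p = "pp lam a E e" and ?q = "qq lam a E e" and ?r = "rr lam a E e" and ?s = "ss lam a E e"
  have 1: "a*?p*cos (a*t) - a*?q* sin (a*t) =
     - lam * ((?p * sin (a*t) + ?q * cos (a*t)) + (?r * sin (a*t) + ?s * cos (a*t))) + E * sin (a*t)" for t
  proof -
    have "a*?p*cos (a*t) - a*?q* sin (a*t) = (a*?p)*cos (a*t) + (-a*?q)* sin (a*t)" by simp
    also have "\<dots> = - lam * (?q + ?s)*cos (a*t) + (- lam * (?p + ?r) + E)* sin (a*t)"
      using c by simp
    finally show ?thesis by (simp add: algebra_simps)
  qed
  have 2: "a*?r*cos (a*t) - a*?s* sin (a*t) =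
     ((?p * sin (a*t) + ?q * cos (a*t)) - (?r * sin (a*t) + ?s * cos (a*t))) / e" for t
  proof -
    have "(a*?r*cos (a*t) - a*?s* sin (a*t)) * e = (a*?r*e)*cos (a*t) + (-a*?s*e)* sin (a*t)"
      by (simp add: algebra_simps)
    also have "\<dots> = (?q - ?s)*cos (a*t) + (?p - ?r)* sin (a*t)" using c by simp
    finally show ?thesis using e by (simp add: field_simps)
  qed
  have d1: "((\<lambda>t. ?p * sin (a*t) + ?q * cos (a*t)) has_real_derivative
     (- lam * ((?p * sin (a*t) + ?q * cos (a*t)) + (?r * sin (a*t) + ?s * cos (a*t))) + E * sin (a*t))) (at t)" for t
    using sc_deriv[of ?p a ?q t] unfolding 1 .
  have d2: "((\<lambda>t. ?r * sin (a*t) + ?s * cos (a*t)) has_real_derivative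
     (((?p * sin (a*t) + ?q * cos (a*t)) - (?r * sin (a*t) + ?s * cos (a*t))) / e)) (at t)" for t
    using sc_deriv[of ?r a ?s t] unfolding 2 .
  show ?thesis unfolding full_mean_periodic_def
    using d1 d2 per_sc[OF a] by simp
qed

lemma avg_exists:
  assumes lam: "lam > 0" and a: "a > 0"
  shows "avg_mean_periodic lam a E (\<lambda>t. pp lam a E 0 * sin (a*t) + qq lam a E 0 * cos (a*t))"
proof -
  note c = coeffs[OF lam, of a E 0]
  let ?p = "pp lam a E 0" and ?q = "qq lam a E 0"
  have rs: "rr lam a E 0 = ?p" "ss lam a E 0 = ?q" unfolding rr_def ss_def kk_def by simp_all
  have 1: "a*?p*cos (a*t) - a*?q* sin (a*t) = - 2 * lam * (?p * sin (a*t) + ?q * cos (a*t)) + E * sin (a*t)" for t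
  proof -
    have "a*?p*cos (a*t) - a*?q* sin (a*t) = (a*?p)*cos (a*t) + (-a*?q)* sin (a*t)" by simp
    also have "\<dots> = - lam * (?q + ?q)*cos (a*t) + (- lam * (?p + ?p) + E)* sin (a*t)"
      using c rs by simp
    finally show ?thesis by (simp add: algebra_simps)
  qed
  have d1: "((\<lambda>t. ?p * sin (a*t) + ?q * cos (a*t)) has_real_derivative
     (- 2 * lam * (?p * sin (a*t) + ?q * cos (a*t)) + E * sin (a*t))) (at t)" for t
    using sc_deriv[of ?p a ?q t] unfolding 1 .
  show ?thesis unfolding avg_mean_periodic_def
    using d1 per_sc[OF a] by simp
qed

definition PP :: "real \<Rightarrow> real \<Rightarrow> real \<Rightarrow> real" where
  "PP lam a e = lam*(a^2 + 4*lam^2)*a^2*e*(3 + a^2*e^2)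
     - 2*lam*a^2*(a^2*e-lam)*(2 + e*(a^2*e-lam)) - 2*lam^3*a^2*e*(4 + a^2*e^2)"
definition QQ :: "real \<Rightarrow> real \<Rightarrow> real \<Rightarrow> real" where
  "QQ lam a e = - a*(a^2 + 4*lam^2)*((a^2*e-lam) + a^2*e + (a^2*e-lam)*(a^2*e^2))
     + a^3*(a^2*e-lam)*(2 + e*(a^2*e-lam)) + a*lam^2*a^2*e*(4 + a^2*e^2)"

lemma PP_eq: "vv lam a e * kk a e * (a^2 + 4*lam^2) - 2*lam*DD lam a e = e * PP lam a e"
  unfolding vv_def kk_def DD_def uu_def PP_def
  by (simp add: algebra_simps power2_eq_square power3_eq_cube)

lemma QQ_eq: "- uu lam a e * kk a e * (a^2 + 4*lam^2) + a*DD lam a e = e * QQ lam a e"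
  unfolding vv_def kk_def DD_def uu_def QQ_def
  by (simp add: algebra_simps power2_eq_square power3_eq_cube)

definition Gp :: "real \<Rightarrow> real \<Rightarrow> real \<Rightarrow> real \<Rightarrow> real" where
  "Gp lam a E e = E * PP lam a e / (DD lam a e * (a^2 + 4*lam^2))"
definition Gq :: "real \<Rightarrow> real \<Rightarrow> real \<Rightarrow> real \<Rightarrow> real" where
  "Gq lam a E e = E * QQ lam a e / (DD lam a e * (a^2 + 4*lam^2))"

lemma DD0: "DD lam a 0 = a^2 + 4*lam^2"
  unfolding DD_def uu_def vv_def kk_def by (simp add: power2_eq_square)

lemma pp_diff:
  assumes lam: "lam > 0"
  shows "pp lam a E e - pp lam a E 0 = e * Gp lam a E e"
proof -
  have D: "DD lam a e \<noteq> 0" using DD_pos[OF lam] by (simp add: less_imp_neq[symmetric])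
  have "a^2 + 4*lam^2 > 0" using lam by (intro add_nonneg_pos) auto
  hence D0: "a^2 + 4*lam^2 \<noteq> 0" by simp
  have p0: "pp lam a E 0 = 2*lam*E/(a^2 + 4*lam^2)"
    unfolding pp_def DD0 by (simp add: vv_def kk_def)
  have "pp lam a E e - pp lam a E 0
     = E * (vv lam a e * kk a e * (a^2 + 4*lam^2) - 2*lam*DD lam a e) / (DD lam a e * (a^2 + 4*lam^2))"
    unfolding p0 unfolding pp_def using D D0 by (simp add: field_simps)
  also have "\<dots> = e * Gp lam a E e" unfolding PP_eq Gp_def by simp
  finally show ?thesis .
qed

lemma qq_diff:
  assumes lam: "lam > 0"
  shows "qq lam a E e - qq lam a E 0 = e * Gq lam a E e"
proof -
  have D: "DD lam a e \<noteq> 0" using DD_pos[OF lam] by (simp add: less_imp_neq[symmetric])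
  have "a^2 + 4*lam^2 > 0" using lam by (intro add_nonneg_pos) auto
  hence D0: "a^2 + 4*lam^2 \<noteq> 0" by simp
  have q0: "qq lam a E 0 = - a*E/(a^2 + 4*lam^2)"
    unfolding qq_def DD0 by (simp add: uu_def kk_def)
  have "qq lam a E e - qq lam a E 0
     = E * (- uu lam a e * kk a e * (a^2 + 4*lam^2) + a*DD lam a e) / (DD lam a e * (a^2 + 4*lam^2))"
    unfolding q0 unfolding qq_def using D D0 by (simp add: field_simps)
  also have "\<dots> = e * Gq lam a E e" unfolding QQ_eq Gq_def by simp
  finally show ?thesis .
qed

lemma G_cont:
  assumes lam: "lam > 0"
  shows "continuous_on S (\<lambda>e. \<bar>Gp lam a E e\<bar> + \<bar>Gq lam a E e\<bar>)"
proof -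
  have "a^2 + 4*lam^2 > 0" using lam by (intro add_nonneg_pos) auto
  hence D: "\<forall>e\<in>S. DD lam a e * (a^2 + 4*lam^2) \<noteq> 0" using DD_pos[OF lam] by (metis mult_pos_pos less_irrefl)
  have cD: "continuous_on S (DD lam a)"
    unfolding DD_def uu_def vv_def kk_def by (intro continuous_intros)
  have cP: "continuous_on S (PP lam a)" "continuous_on S (QQ lam a)"
    unfolding PP_def QQ_def by (intro continuous_intros)+
  show ?thesis unfolding Gp_def Gq_def
    by (intro continuous_intros cP cD D)
qed

theorem mainTheorem1:
  fixes lam a E :: real
  assumes "lam > 0" and "a > 0"
  shows "\<exists>C > 0. \<exists>eps0 > 0. \<forall>eps. 0 < eps \<and> eps < eps0 \<longrightarrow>
           L2_norm_on (2 * pi / a) (\<lambda>t. muX_per lam a E eps t - barmuX_per lam a E t) \<le> C * eps"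
proof -
  note lam = assms(1) and a = assms(2)
  let ?G = "\<lambda>e. \<bar>Gp lam a E e\<bar> + \<bar>Gq lam a E e\<bar>"
  obtain x0 where x0: "x0 \<in> {0..1}" "\<forall>y\<in>{0..1::real}. ?G y \<le> ?G x0"
    using continuous_attains_sup[of "{0..1::real}" ?G] G_cont[OF lam] by auto
  define B where "B = ?G x0"
  have B0: "B \<ge> 0" unfolding B_def by simp
  define T where "T = 2*pi/a"
  have T0: "T > 0" unfolding T_def using a by simp
  define C where "C = sqrt T * B + 1"
  have C0: "C > 0" unfolding C_def using B0 T0 by (simp add: add_nonneg_pos)
  have main: "L2_norm_on T (\<lambda>t. muX_per lam a E eps t - barmuX_per lam a E t) \<le> C * eps"
    if e: "0 < eps" "eps < 1" for eps
  proof -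
    let ?mx = "\<lambda>t. pp lam a E eps * sin (a*t) + qq lam a E eps * cos (a*t)"
    let ?my = "\<lambda>t. rr lam a E eps * sin (a*t) + ss lam a E eps * cos (a*t)"
    let ?m = "\<lambda>t. pp lam a E 0 * sin (a*t) + qq lam a E 0 * cos (a*t)"
    have "(THE p. full_mean_periodic lam a E eps (fst p) (snd p)) = (?mx, ?my)"
    proof (rule the_equality)
      show "full_mean_periodic lam a E eps (fst (?mx, ?my)) (snd (?mx, ?my))"
        using full_exists[OF lam a e(1)] by simp
      fix p assume "full_mean_periodic lam a E eps (fst p) (snd p)"
      from full_unique[OF lam a e(1) this full_exists[OF lam a e(1)]]
      show "p = (?mx, ?my)" by (simp add: prod_eq_iff)
    qed
    hence mx: "muX_per lam a E eps = ?mx" unfolding muX_per_def by simp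
    have m: "barmuX_per lam a E = ?m" unfolding barmuX_per_def
      apply (rule the_equality)
       apply (rule avg_exists[OF lam a])
      apply (rule avg_unique[OF lam a])
       apply assumption
      apply (rule avg_exists[OF lam a])
      done
    have diff: "muX_per lam a E eps t - barmuX_per lam a E t
       = eps * (Gp lam a E eps * sin (a*t) + Gq lam a E eps * cos (a*t))" for t
    proof -
      have "muX_per lam a E eps t - barmuX_per lam a E t
        = (pp lam a E eps - pp lam a E 0) * sin (a*t) + (qq lam a E eps - qq lam a E 0) * cos (a*t)"
        unfolding mx m by (simp add: algebra_simps)
      thus ?thesis unfolding pp_diff[OF lam] qq_diff[OF lam] by (simp add: algebra_simps)
    qed
    have GB: "?G eps \<le> B" unfolding B_def using x0(2) e by simp
    have bnd: "(muX_per lam a E eps t - barmuX_per lam a E t)^2 \<le> (eps * B)^2" for t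
    proof -
      have "\<bar>Gp lam a E eps * sin (a*t) + Gq lam a E eps * cos (a*t)\<bar>
         \<le> \<bar>Gp lam a E eps\<bar> * \<bar>sin (a*t)\<bar> + \<bar>Gq lam a E eps\<bar> * \<bar>cos (a*t)\<bar>"
        by (metis abs_mult abs_triangle_ineq)
      also have "\<dots> \<le> \<bar>Gp lam a E eps\<bar> * 1 + \<bar>Gq lam a E eps\<bar> * 1"
        by (intro add_mono mult_left_mono) auto
      also have "\<dots> \<le> B" using GB by simp
      finally have "\<bar>muX_per lam a E eps t - barmuX_per lam a E t\<bar> \<le> eps * B"
        unfolding diff using e by (simp add: abs_mult mult_left_mono)
      hence "\<bar>muX_per lam a E eps t - barmuX_per lam a E t\<bar>^2 \<le> (eps * B)^2"
        by (intro power_mono) auto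
      thus ?thesis by simp
    qed
    have cont: "continuous_on {0..T} (\<lambda>t. (muX_per lam a E eps t - barmuX_per lam a E t)^2)"
      unfolding mx m by (intro continuous_intros)
    have "integral {0..T} (\<lambda>t. (muX_per lam a E eps t - barmuX_per lam a E t)^2)
        \<le> integral {0..T} (\<lambda>t. (eps * B)^2)"
      by (rule integral_le[OF integrable_continuous_interval[OF cont]]) (auto simp: bnd)
    also have "\<dots> = T * (eps * B)^2" using T0 by simp
    finally have "L2_norm_on T (\<lambda>t. muX_per lam a E eps t - barmuX_per lam a E t) \<le> sqrt (T * (eps * B)^2)"
      unfolding L2_norm_on_def by simp
    also have "\<dots> = sqrt T * (eps * B)" using e B0 by (simp add: real_sqrt_mult)
    also have "\<dots> \<le> C * eps" unfolding C_def using e by (simp add: algebra_simps)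
    finally show ?thesis .
  qed
  show ?thesis
    apply (rule exI[of _ C], intro conjI C0)
    apply (rule exI[of _ 1])
    using main unfolding T_def by auto
qed

end
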